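(* Let $G$ be a connected graph and $H$ an isometric subgraph of $G$ which is a Helly graph. Then: (i) for every $v\in V(G)$, $S_H(v)\neq\varnothing$; (ii) for every edge $uv\in E(G)$ and every $y\in S_H(u)$, we have $d(y,S_H(v))\le 1$.
   Context: Graphs are finite and simple; $d=d_G$ denotes distance in $G$, and $d(y,S)=\min_{s\in S}d(y,s)$. A subgraph $H$ of $G$ is isometric if $d_H(x,y)=d_G(x,y)$ for all $x,y\in V(H)$. For $u\in V(H)$, $k\ge0$, $N_H^k[u]=\{y\in V(H): d_H(u,y)\le k\}$. A graph $H$ is a Helly graph if every subfamily of $\{N_H^k[u]: u\in V(H), k\ge0\}$ whose members pairwise intersect has nonempty intersection. The wide shadow of $v\in V(G)$ on $H$ is $S_H(v)=\{y\in V(H): d(y,x)\le d(v,x)\text{ for all } x\in V(H)\}$. *)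

theory Defs
  imports Main "HOL-Library.Extended_Nat"
begin

definition simple_graph :: "'a set \<Rightarrow> ('a \<Rightarrow> 'a \<Rightarrow> bool) \<Rightarrow> bool" where
  "simple_graph V E \<longleftrightarrow> finite V \<and> (\<forall>x y. E x y \<longrightarrow> x \<in> V \<and> y \<in> V)
     \<and> (\<forall>x y. E x y \<longrightarrow> E y x) \<and> (\<forall>x. \<not> E x x)"

definition gwalk :: "'a set \<Rightarrow> ('a \<Rightarrow> 'a \<Rightarrow> bool) \<Rightarrow> 'a list \<Rightarrow> bool" where
  "gwalk V E xs \<longleftrightarrow> xs \<noteq> [] \<and> set xs \<subseteq> V \<and> (\<forall>i. Suc i < length xs \<longrightarrow> E (xs ! i) (xs ! Suc i))"

text \<open>Graph distance (infinite if no walk exists).\<close>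
definition gdist :: "'a set \<Rightarrow> ('a \<Rightarrow> 'a \<Rightarrow> bool) \<Rightarrow> 'a \<Rightarrow> 'a \<Rightarrow> enat" where
  "gdist V E x y = (INF xs \<in> {xs. gwalk V E xs \<and> hd xs = x \<and> last xs = y}. enat (length xs - 1))"

definition connected_graph :: "'a set \<Rightarrow> ('a \<Rightarrow> 'a \<Rightarrow> bool) \<Rightarrow> bool" where
  "connected_graph V E \<longleftrightarrow> (\<forall>x\<in>V. \<forall>y\<in>V. gdist V E x y < \<infinity>)"

definition subgraph :: "'a set \<Rightarrow> ('a \<Rightarrow> 'a \<Rightarrow> bool) \<Rightarrow> 'a set \<Rightarrow> ('a \<Rightarrow> 'a \<Rightarrow> bool) \<Rightarrow> bool" where
  "subgraph VH EH V E \<longleftrightarrow> simple_graph VH EH \<and> VH \<subseteq> V \<and> (\<forall>x y. EH x y \<longrightarrow> E x y)"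

definition isometric_subgraph :: "'a set \<Rightarrow> ('a \<Rightarrow> 'a \<Rightarrow> bool) \<Rightarrow> 'a set \<Rightarrow> ('a \<Rightarrow> 'a \<Rightarrow> bool) \<Rightarrow> bool" where
  "isometric_subgraph VH EH V E \<longleftrightarrow> subgraph VH EH V E \<and>
     (\<forall>x\<in>VH. \<forall>y\<in>VH. gdist VH EH x y = gdist V E x y)"

definition gball :: "'a set \<Rightarrow> ('a \<Rightarrow> 'a \<Rightarrow> bool) \<Rightarrow> 'a \<Rightarrow> nat \<Rightarrow> 'a set" where
  "gball V E u k = {y \<in> V. gdist V E u y \<le> enat k}"

definition helly_graph :: "'a set \<Rightarrow> ('a \<Rightarrow> 'a \<Rightarrow> bool) \<Rightarrow> bool" where
  "helly_graph V E \<longleftrightarrow> (\<forall>F \<subseteq> V \<times> (UNIV :: nat set).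
     (\<forall>(u,k)\<in>F. \<forall>(v,l)\<in>F. gball V E u k \<inter> gball V E v l \<noteq> {}) \<longrightarrow>
     (\<Inter>(u,k)\<in>F. gball V E u k) \<noteq> {})"

definition wide_shadow :: "'a set \<Rightarrow> ('a \<Rightarrow> 'a \<Rightarrow> bool) \<Rightarrow> 'a set \<Rightarrow> 'a \<Rightarrow> 'a set" where
  "wide_shadow V E VH v = {y \<in> VH. \<forall>x\<in>VH. gdist V E y x \<le> gdist V E v x}"

end

theory Submission
  imports Defs
begin

lemma gwalk_single: "gwalk V E [x] \<longleftrightarrow> x \<in> V"
  unfolding gwalk_def by simp

lemma gwalk_cons2: "gwalk V E (x # y # xs) \<longleftrightarrow> x \<in> V \<and> E x y \<and> gwalk V E (y # xs)"
proof
  assume h: "gwalk V E (x # y # xs)"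
  have all: "\<forall>i. Suc i < length (x#y#xs) \<longrightarrow> E ((x#y#xs)!i) ((x#y#xs)!Suc i)"
    using h unfolding gwalk_def by blast
  have "E x y" using all[rule_format, of 0] by simp
  moreover have "gwalk V E (y # xs)" unfolding gwalk_def
  proof (intro conjI allI impI)
    fix i assume "Suc i < length (y # xs)"
    then have "Suc (Suc i) < length (x # y # xs)" by simp
    then show "E ((y # xs) ! i) ((y # xs) ! Suc i)" using all[rule_format, of "Suc i"] by simp
  qed (use h in \<open>auto simp: gwalk_def\<close>)
  ultimately show "x \<in> V \<and> E x y \<and> gwalk V E (y # xs)" using h by (simp add: gwalk_def)
next
  assume h: "x \<in> V \<and> E x y \<and> gwalk V E (y # xs)"
  show "gwalk V E (x # y # xs)" unfolding gwalk_def
  proof (intro conjI allI impI)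
    fix i assume i: "Suc i < length (x # y # xs)"
    show "E ((x # y # xs) ! i) ((x # y # xs) ! Suc i)"
    proof (cases i)
      case 0 then show ?thesis using h by simp
    next
      case (Suc j)
      then have "Suc j < length (y # xs)" using i by simp
      then show ?thesis using h Suc unfolding gwalk_def by simp
    qed
  qed (use h in \<open>auto simp: gwalk_def\<close>)
qed

lemma gwalk_append:
  assumes "gwalk V E xs" "gwalk V E ys" "last xs = hd ys"
  shows "gwalk V E (xs @ tl ys)"
  using assms
proof (induction xs rule: induct_list012)
  case 1 then show ?case by (simp add: gwalk_def)
next
  case (2 x) then show ?case
    by (metis append_Cons append_Nil gwalk_def last.simps list.collapse)
next
  case (3 x y zs)
  have "gwalk V E (y # zs)" using 3(3) gwalk_cons2 by metis
  then have "gwalk V E ((y # zs) @ tl ys)" using 3 by simp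
  then show ?case using 3(3) gwalk_cons2 by (metis append_Cons)
qed

lemma gwalk_rev:
  assumes "gwalk V E xs" "\<forall>x y. E x y \<longrightarrow> E y x"
  shows "gwalk V E (rev xs)"
  unfolding gwalk_def
proof (intro conjI allI impI)
  fix i assume i: "Suc i < length (rev xs)"
  let ?n = "length xs"
  have a: "rev xs ! i = xs ! (?n - Suc i)" using i by (simp add: rev_nth)
  have b: "rev xs ! Suc i = xs ! (?n - Suc (Suc i))" using i by (simp add: rev_nth)
  have c: "Suc (?n - Suc (Suc i)) = ?n - Suc i" using i by simp
  have "E (xs ! (?n - Suc (Suc i))) (xs ! Suc (?n - Suc (Suc i)))"
    using assms(1) i unfolding gwalk_def by simp
  then show "E (rev xs ! i) (rev xs ! Suc i)" using a b c assms(2) by metis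
qed (use assms in \<open>auto simp: gwalk_def\<close>)

lemma gwalk_take: "gwalk V E xs \<Longrightarrow> gwalk V E (take (Suc k) xs)"
  unfolding gwalk_def by (auto dest: in_set_takeD)

lemma gwalk_drop: "gwalk V E xs \<Longrightarrow> k < length xs \<Longrightarrow> gwalk V E (drop k xs)"
  unfolding gwalk_def by (auto dest: in_set_dropD)

lemma enat_the_enat': "x \<noteq> \<infinity> \<Longrightarrow> enat (the_enat x) = x"
  by (cases x) auto

lemma gdist_le: "gwalk V E xs \<Longrightarrow> hd xs = x \<Longrightarrow> last xs = y \<Longrightarrow> gdist V E x y \<le> enat (length xs - 1)"
  unfolding gdist_def by (rule INF_lower) auto

lemma gdist_walk:
  assumes "gdist V E x y = enat n"
  shows "\<exists>xs. gwalk V E xs \<and> hd xs = x \<and> last xs = y \<and> length xs = Suc n"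
proof -
  let ?S = "(\<lambda>xs. enat (length xs - 1)) ` {xs. gwalk V E xs \<and> hd xs = x \<and> last xs = y}"
  have g: "gdist V E x y = Inf ?S" unfolding gdist_def by simp
  have ne: "?S \<noteq> {}"
  proof
    assume "?S = {}"
    then have "gdist V E x y = \<infinity>" using g Inf_empty top_enat_def by metis
    then show False using assms by simp
  qed
  then obtain z where z: "z \<in> ?S" by blast
  have "Inf ?S = (LEAST x. x \<in> ?S)" using ne by (simp only: Inf_enat_def if_False)
  then have "Inf ?S \<in> ?S" using LeastI[of "\<lambda>x. x \<in> ?S" z, OF z] by simp
  then obtain xs where "gwalk V E xs" "hd xs = x" "last xs = y" "enat (length xs - 1) = enat n"
    using assms g by auto
  moreover then have "length xs = Suc n" unfolding gwalk_def by auto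
  ultimately show ?thesis by blast
qed

lemma gdist_sym:
  assumes "\<forall>x y. E x y \<longrightarrow> E y x"
  shows "gdist V E x y \<le> gdist V E y x"
  unfolding gdist_def[of V E y x]
proof (rule INF_greatest)
  fix xs assume "xs \<in> {xs. gwalk V E xs \<and> hd xs = y \<and> last xs = x}"
  then have "gwalk V E (rev xs)" "hd (rev xs) = x" "last (rev xs) = y"
    using gwalk_rev[OF _ assms] by (auto simp: hd_rev last_rev)
  then show "gdist V E x y \<le> enat (length xs - 1)" using gdist_le by fastforce
qed

lemma gdist_sym_eq:
  assumes "\<forall>x y. E x y \<longrightarrow> E y x"
  shows "gdist V E x y = gdist V E y x"
  using gdist_sym[OF assms] by (metis order_antisym)

lemma gdist_refl: "x \<in> V \<Longrightarrow> gdist V E x x \<le> 0"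
  using gdist_le[of V E "[x]" x x] by (simp add: gwalk_single zero_enat_def)

lemma gdist_edge: "E x y \<Longrightarrow> x \<in> V \<Longrightarrow> y \<in> V \<Longrightarrow> gdist V E x y \<le> 1"
  using gdist_le[of V E "[x,y]" x y] by (simp add: gwalk_single gwalk_cons2 one_enat_def)

lemma gdist_triangle: "gdist V E x z \<le> gdist V E x y + gdist V E y z"
proof (cases "gdist V E x y = \<infinity> \<or> gdist V E y z = \<infinity>")
  case True then show ?thesis by auto
next
  case False
  then obtain a b where ab: "gdist V E x y = enat a" "gdist V E y z = enat b" by auto
  obtain xs where xs: "gwalk V E xs" "hd xs = x" "last xs = y" "length xs = Suc a"
    using gdist_walk[OF ab(1)] by blast
  obtain ys where ys: "gwalk V E ys" "hd ys = y" "last ys = z" "length ys = Suc b"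
    using gdist_walk[OF ab(2)] by blast
  have w: "gwalk V E (xs @ tl ys)" using gwalk_append[OF xs(1) ys(1)] xs(3) ys(2) by simp
  have xne: "xs \<noteq> []" using xs(4) by auto
  have e1: "hd (xs @ tl ys) = x" using xne xs(2) by simp
  have e2: "last (xs @ tl ys) = z"
  proof (cases "tl ys = []")
    case True
    then have "ys = [hd ys]" using ys(4) by (cases ys) auto
    then have "z = y" using ys(2,3) by (metis last.simps)
    then show ?thesis using True xs(3) by simp
  next
    case False
    then have "last (tl ys) = last ys" by (simp add: last_tl)
    then show ?thesis using False ys(3) by simp
  qed
  have "gdist V E x z \<le> enat (length (xs @ tl ys) - 1)" using gdist_le[OF w e1 e2] .
  also have "\<dots> = enat a + enat b" using xs ys by simp
  finally show ?thesis using ab by simp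
qed

lemma gdist_split:
  assumes sym: "\<forall>x y. E x y \<longrightarrow> E y x" and le: "gdist V E x x' \<le> enat (a + b)"
  shows "\<exists>y\<in>V. gdist V E x y \<le> enat a \<and> gdist V E x' y \<le> enat b"
proof -
  obtain n where n: "gdist V E x x' = enat n" using le by (cases "gdist V E x x'") auto
  have nab: "n \<le> a + b" using le n by simp
  obtain xs where xs: "gwalk V E xs" "hd xs = x" "last xs = x'" "length xs = Suc n"
    using gdist_walk[OF n] by blast
  define k where "k = min a n"
  have k: "k < length xs" using xs(4) k_def by simp
  let ?y = "xs ! k"
  have yV: "?y \<in> V" using xs(1) k unfolding gwalk_def by (meson nth_mem subsetD)
  have t: "gwalk V E (take (Suc k) xs)" using gwalk_take xs(1) by blast
  have "hd (take (Suc k) xs) = hd xs" using k by (cases xs) simp_all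
  then have h1: "hd (take (Suc k) xs) = x" using xs(2) by simp
  have h2: "last (take (Suc k) xs) = ?y"
  proof -
    have "take (Suc k) xs = take k xs @ [xs ! k]" using k by (simp add: take_Suc_conv_app_nth)
    then show ?thesis by simp
  qed
  have d1: "gdist V E x ?y \<le> enat (length (take (Suc k) xs) - 1)"
    using gdist_le[OF t h1 h2] .
  have "length (take (Suc k) xs) - 1 = k" using k by simp
  with d1 have d1': "gdist V E x ?y \<le> enat a" using k_def
    by (metis enat_ord_simps(1) min.cobounded1 order_trans)
  have dr: "gwalk V E (drop k xs)" using gwalk_drop xs(1) k by blast
  have h3: "hd (drop k xs) = ?y" using k by (simp add: hd_drop_conv_nth)
  have h4: "last (drop k xs) = x'" using k xs by simp
  have d2: "gdist V E ?y x' \<le> enat (length (drop k xs) - 1)"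
    using gdist_le[OF dr h3 h4] .
  have "length (drop k xs) - 1 \<le> b" using xs(4) k_def nab by auto
  with d2 have "gdist V E ?y x' \<le> enat b" by (meson enat_ord_simps(1) order_trans)
  then have "gdist V E x' ?y \<le> enat b" using gdist_sym_eq[OF sym] by metis
  with d1' yV show ?thesis by blast
qed

lemma helly_use:
  assumes h: "helly_graph VH EH" and sym: "\<forall>x y. EH x y \<longrightarrow> EH y x"
    and F: "F \<subseteq> VH \<times> UNIV" and Fne: "F \<noteq> {}"
    and pw: "\<And>x a x' b. (x,a) \<in> F \<Longrightarrow> (x',b) \<in> F \<Longrightarrow> gdist VH EH x x' \<le> enat (a + b)"
  shows "\<exists>s\<in>VH. \<forall>(x,a)\<in>F. gdist VH EH x s \<le> enat a"
proof -
  have "\<forall>(u,k)\<in>F. \<forall>(v,l)\<in>F. gball VH EH u k \<inter> gball VH EH v l \<noteq> {}"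
  proof (intro ballI, clarify)
    fix u k v l assume uk: "(u,k) \<in> F" and vl: "(v,l) \<in> F"
      and e: "gball VH EH u k \<inter> gball VH EH v l = {}"
    obtain y where "y \<in> VH" "gdist VH EH u y \<le> enat k" "gdist VH EH v y \<le> enat l"
      using gdist_split[OF sym pw[OF uk vl]] by blast
    then have "y \<in> gball VH EH u k \<inter> gball VH EH v l" unfolding gball_def by simp
    with e show False by blast
  qed
  then have "(\<Inter>(u,k)\<in>F. gball VH EH u k) \<noteq> {}" using h F unfolding helly_graph_def by blast
  then obtain s where s: "s \<in> (\<Inter>(u,k)\<in>F. gball VH EH u k)" by blast
  show ?thesis
  proof (cases "F = {}")
    case True then show ?thesis using Fne by blast
  next
    case False
    then obtain p where "p \<in> F" by blast
    then have "s \<in> VH" using s unfolding gball_def by (cases p) fastforce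
    moreover have "\<forall>(x,a)\<in>F. gdist VH EH x s \<le> enat a" using s unfolding gball_def by fastforce
    ultimately show ?thesis by blast
  qed
qed

theorem lemma2p3:
  fixes V VH :: "'a set" and E EH :: "'a \<Rightarrow> 'a \<Rightarrow> bool"
  assumes "simple_graph V E" and "connected_graph V E"
    and "isometric_subgraph VH EH V E" and "VH \<noteq> {}"
    and "helly_graph VH EH"
  shows "(\<forall>v\<in>V. wide_shadow V E VH v \<noteq> {}) \<and>
         (\<forall>u v y. E u v \<longrightarrow> y \<in> wide_shadow V E VH u \<longrightarrow>
            (\<exists>s\<in>wide_shadow V E VH v. gdist V E y s \<le> 1))"
proof -
  have symE: "\<forall>x y. E x y \<longrightarrow> E y x" and EV: "\<forall>x y. E x y \<longrightarrow> x \<in> V \<and> y \<in> V"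
    using assms(1) unfolding simple_graph_def by auto
  have sH: "simple_graph VH EH" and sub: "VH \<subseteq> V"
    and iso: "\<forall>x\<in>VH. \<forall>y\<in>VH. gdist VH EH x y = gdist V E x y"
    using assms(3) unfolding isometric_subgraph_def subgraph_def by auto
  have symH: "\<forall>x y. EH x y \<longrightarrow> EH y x" using sH unfolding simple_graph_def by auto
  have fin: "\<And>x y. x \<in> V \<Longrightarrow> y \<in> V \<Longrightarrow> gdist V E x y \<noteq> \<infinity>"
    using assms(2) unfolding connected_graph_def by auto
  define r where "r v x = the_enat (gdist V E v x)" for v x
  have r: "\<And>v x. v \<in> V \<Longrightarrow> x \<in> V \<Longrightarrow> enat (r v x) = gdist V E v x"
    unfolding r_def using fin by (metis enat_the_enat')
  have key: "gdist VH EH x x' \<le> enat (r v x + r v x')"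
    if "v \<in> V" "x \<in> VH" "x' \<in> VH" for v x x'
  proof -
    have "gdist VH EH x x' = gdist V E x x'" using iso that by blast
    also have "\<dots> \<le> gdist V E x v + gdist V E v x'" by (rule gdist_triangle)
    also have "\<dots> = gdist V E v x + gdist V E v x'" using gdist_sym_eq[OF symE] by metis
    also have "\<dots> = enat (r v x + r v x')"
    proof -
      have "enat (r v x) = gdist V E v x" "enat (r v x') = gdist V E v x'" using r that sub by auto
      then show ?thesis by (metis plus_enat_simps(1))
    qed
    finally show ?thesis .
  qed
  have shadow: "s \<in> wide_shadow V E VH v"
    if v: "v \<in> V" and s: "s \<in> VH" and h: "\<forall>x\<in>VH. gdist VH EH x s \<le> enat (r v x)" for v s
    unfolding wide_shadow_def
  proof (intro CollectI conjI ballI s)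
    fix x assume x: "x \<in> VH"
    have "gdist V E s x = gdist VH EH x s" using iso x s gdist_sym_eq[OF symE] by metis
    also have "\<dots> \<le> enat (r v x)" using h x by blast
    also have "\<dots> = gdist V E v x" using r v x sub by auto
    finally show "gdist V E s x \<le> gdist V E v x" .
  qed
  have part1: "wide_shadow V E VH v \<noteq> {}" if v: "v \<in> V" for v
  proof -
    let ?F = "(\<lambda>x. (x, r v x)) ` VH"
    have "\<exists>s\<in>VH. \<forall>(x,a)\<in>?F. gdist VH EH x s \<le> enat a"
      by (rule helly_use[OF assms(5) symH]) (use assms(4) key v in auto)
    then obtain s where "s \<in> VH" "\<forall>x\<in>VH. gdist VH EH x s \<le> enat (r v x)" by auto
    then show ?thesis using shadow v by blast
  qed
  have part2: "\<exists>s\<in>wide_shadow V E VH v. gdist V E y s \<le> 1"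
    if e: "E u v" and y: "y \<in> wide_shadow V E VH u" for u v y
  proof -
    have uv: "u \<in> V" "v \<in> V" using EV e by auto
    have yH: "y \<in> VH" and yu: "\<forall>x\<in>VH. gdist V E y x \<le> gdist V E u x"
      using y unfolding wide_shadow_def by auto
    have ky: "gdist VH EH y x \<le> enat (1 + r v x)" if x: "x \<in> VH" for x
    proof -
      have "gdist VH EH y x = gdist V E y x" using iso x yH by blast
      also have "\<dots> \<le> gdist V E u x" using yu x by blast
      also have "\<dots> \<le> gdist V E u v + gdist V E v x" by (rule gdist_triangle)
      also have "\<dots> \<le> 1 + gdist V E v x" using gdist_edge[of E u v V, OF e uv(1) uv(2)] by (rule add_right_mono)
      also have "\<dots> = enat (1 + r v x)"
      proof -
        have rx: "enat (r v x) = gdist V E v x" using r[OF uv(2) subsetD[OF sub x]] .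
        show ?thesis unfolding rx[symmetric] one_enat_def plus_enat_simps(1) by (rule refl)
      qed
      finally show ?thesis .
    qed
    have kyy: "gdist VH EH y y \<le> enat (1 + 1)"
    proof -
      have "(0::enat) \<le> enat (1 + 1)" by simp
      then show ?thesis using gdist_refl[OF yH, of EH] by (metis order_trans)
    qed
    let ?F = "(\<lambda>x. (x, r v x)) ` VH \<union> {(y, 1)}"
    have "\<exists>s\<in>VH. \<forall>(x,a)\<in>?F. gdist VH EH x s \<le> enat a"
    proof (rule helly_use[OF assms(5) symH])
      fix x a x' b assume xa: "(x,a) \<in> ?F" and xb: "(x',b) \<in> ?F"
      show "gdist VH EH x x' \<le> enat (a + b)"
        using xa xb
      proof (elim UnE)
        assume "(x,a) \<in> (\<lambda>x. (x, r v x)) ` VH" "(x',b) \<in> (\<lambda>x. (x, r v x)) ` VH"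
        then show ?thesis using key uv by auto
      next
        assume "(x,a) \<in> (\<lambda>x. (x, r v x)) ` VH" "(x',b) \<in> {(y,1)}"
        then have "x \<in> VH" "a = r v x" "x' = y" "b = 1" by auto
        then show ?thesis using ky[of x] gdist_sym_eq[OF symH, of VH y x] by (simp add: add.commute)
      next
        assume "(x,a) \<in> {(y,1)}" "(x',b) \<in> (\<lambda>x. (x, r v x)) ` VH"
        then show ?thesis using ky by auto
      next
        assume "(x,a) \<in> {(y,1)}" "(x',b) \<in> {(y,1)}"
        then show ?thesis using kyy by auto
      qed
    qed (use yH in auto)
    then obtain s where s: "s \<in> VH" "\<forall>x\<in>VH. gdist VH EH x s \<le> enat (r v x)"
      and ys: "gdist VH EH y s \<le> enat 1" by auto
    have "s \<in> wide_shadow V E VH v" using shadow uv s by blast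
    moreover have "gdist V E y s \<le> 1" using ys iso yH s by (simp add: one_enat_def)
    ultimately show ?thesis by blast
  qed
  show ?thesis using part1 part2 by blast
qed

end
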